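(* Let $A,B$ be Pareto sets of size $n$ each, sorted lexicographically, with Minkowski matrix $M_{ij}=A_i+B_j$, and let a query range $R=[x_{\min},x_{\max})\times[y_{\min},y_{\max})$ be given. The sweep procedure returns the lexicographically smallest entry of $M$ lying in $R$ (or reports that none exists), and it runs in $\mathcal{O}(n)$ time.
   Context: A Pareto set is a set $S\subset\mathbb{R}^2$ in which no point dominates another ($p$ dominates $p'$ if $p\ne p'$, $p.x\le p'.x$, $p.y\le p'.y$); sorted lexicographically, its $x$-coordinates strictly increase and $y$-coordinates strictly decrease, so for $s\ge i$, $t\ge j$ the entry $M_{st}$ has $x$-coordinate at least and $y$-coordinate at most those of $M_{ij}$. Entries of $M$ are computed on demand. The sweep procedure: keep a current candidate (initially none) and a current row index $i$, starting at $i=n$ in column $1$. For columns $j=1,\dots,n$ in order: starting at row $i$ of column $j$, move upward (decrease $i$) by linear search as long as $i\ge 2$ and the entry $M_{i-1,j}$ still satisfies $x\ge x_{\min}$ and $y<y_{\max}$ (no movement if $M_{ij}$ itself violates $x\ge x_{\min}$ or $y<y_{\max}$); then if $M_{ij}\in R$ and it is lexicographically smaller than the current candidate (or there is no candidate yet), make it the candidate; then proceed to column $j+1$ keeping the same row index $i$. After the last column, return the candidate. *)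

theory Defs
  imports Complex_Main "HOL-Library.Product_Lexorder"
begin

text \<open>Points of the plane: pairs of reals. With Product_Lexorder, the order on
  real \<times> real is the lexicographic order.\<close>
type_synonym point = "real \<times> real"

definition dominates :: "point \<Rightarrow> point \<Rightarrow> bool" where
  "dominates p p' \<longleftrightarrow> p \<noteq> p' \<and> fst p \<le> fst p' \<and> snd p \<le> snd p'"

definition pareto :: "point set \<Rightarrow> bool" where
  "pareto S \<longleftrightarrow> (\<forall>p\<in>S. \<forall>p'\<in>S. \<not> dominates p p')"

text \<open>A Pareto set of size n, sorted lexicographically, given as a list
  (0-based: entry i of the list is A_{i+1} of the paper).\<close>
definition sorted_pareto :: "nat \<Rightarrow> point list \<Rightarrow> bool" where
  "sorted_pareto n A \<longleftrightarrow> length A = n \<and> sorted_wrt (<) A \<and> pareto (set A)"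

definition mink :: "point list \<Rightarrow> point list \<Rightarrow> nat \<Rightarrow> nat \<Rightarrow> point" where
  "mink A B i j = (fst (A ! i) + fst (B ! j), snd (A ! i) + snd (B ! j))"

definition in_range :: "real \<Rightarrow> real \<Rightarrow> real \<Rightarrow> real \<Rightarrow> point \<Rightarrow> bool" where
  "in_range xmin xmax ymin ymax p \<longleftrightarrow>
     xmin \<le> fst p \<and> fst p < xmax \<and> ymin \<le> snd p \<and> snd p < ymax"

definition walk_ok :: "real \<Rightarrow> real \<Rightarrow> point \<Rightarrow> bool" where
  "walk_ok xmin ymax p \<longleftrightarrow> xmin \<le> fst p \<and> snd p < ymax"

text \<open>Upward linear search in one column (0-based row index i; the paper's
  condition i \<ge> 2 becomes i > 0). Returns the final row together with the
  number of loop iterations executed (each iteration inspects O(1) entries).\<close>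
fun walk :: "(nat \<Rightarrow> point) \<Rightarrow> real \<Rightarrow> real \<Rightarrow> nat \<Rightarrow> nat \<times> nat" where
  "walk col xmin ymax i =
     (if 0 < i \<and> walk_ok xmin ymax (col i) \<and> walk_ok xmin ymax (col (i - 1))
      then (let (i', c) = walk col xmin ymax (i - 1) in (i', Suc c))
      else (i, 1))"

text \<open>Sweep state: (candidate, current row, accumulated step count).
  Processing column j: walk up, then possibly update the candidate
  (one more unit of work).\<close>
definition sweep_col ::
  "point list \<Rightarrow> point list \<Rightarrow> real \<Rightarrow> real \<Rightarrow> real \<Rightarrow> real \<Rightarrow> nat
   \<Rightarrow> point option \<times> nat \<times> nat \<Rightarrow> point option \<times> nat \<times> nat" where
  "sweep_col A B xmin xmax ymin ymax j st =
     (case st of (cand, i, t) \<Rightarrow>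
        (case walk (\<lambda>r. mink A B r j) xmin ymax i of (i', c) \<Rightarrow>
           (let p = mink A B i' j;
                cand' = (if in_range xmin xmax ymin ymax p \<and>
                            (case cand of None \<Rightarrow> True | Some q \<Rightarrow> p < q)
                         then Some p else cand)
            in (cand', i', t + c + 1))))"

text \<open>The full sweep: start with no candidate at the last row (n-1, i.e. row n
  of the paper), process columns 0..n-1 in order.\<close>
definition sweep_state ::
  "nat \<Rightarrow> point list \<Rightarrow> point list \<Rightarrow> real \<Rightarrow> real \<Rightarrow> real \<Rightarrow> real
   \<Rightarrow> point option \<times> nat \<times> nat" where
  "sweep_state n A B xmin xmax ymin ymax =
     fold (sweep_col A B xmin xmax ymin ymax) [0..<n] (None, n - 1, 0)"

definition sweep ::
  "nat \<Rightarrow> point list \<Rightarrow> point list \<Rightarrow> real \<Rightarrow> real \<Rightarrow> real \<Rightarrow> real \<Rightarrow> point option" where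
  "sweep n A B xmin xmax ymin ymax = fst (sweep_state n A B xmin xmax ymin ymax)"

definition sweep_time ::
  "nat \<Rightarrow> point list \<Rightarrow> point list \<Rightarrow> real \<Rightarrow> real \<Rightarrow> real \<Rightarrow> real \<Rightarrow> nat" where
  "sweep_time n A B xmin xmax ymin ymax = snd (snd (sweep_state n A B xmin xmax ymin ymax))"

definition entries_in_range ::
  "nat \<Rightarrow> point list \<Rightarrow> point list \<Rightarrow> real \<Rightarrow> real \<Rightarrow> real \<Rightarrow> real \<Rightarrow> point set" where
  "entries_in_range n A B xmin xmax ymin ymax =
     {p. \<exists>i<n. \<exists>j<n. p = mink A B i j \<and> in_range xmin xmax ymin ymax p}"

end

theory Submission
  imports Defs
begin

declare walk.simps[simp del]

lemma walk_props:
  "fst (walk col xm ym i) \<le> i \<and>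
   snd (walk col xm ym i) = i - fst (walk col xm ym i) + 1 \<and>
   (walk_ok xm ym (col i) \<longrightarrow> walk_ok xm ym (col (fst (walk col xm ym i))) \<and>
      (fst (walk col xm ym i) = 0 \<or> \<not> walk_ok xm ym (col (fst (walk col xm ym i) - 1)))) \<and>
   (\<not> walk_ok xm ym (col i) \<longrightarrow> fst (walk col xm ym i) = i)"
proof (induction col xm ym i rule: walk.induct)
  case (1 col xmin ymax i)
  show ?case
  proof (cases "0 < i \<and> walk_ok xmin ymax (col i) \<and> walk_ok xmin ymax (col (i - 1))")
    case True
    obtain a b where ab: "walk col xmin ymax (i - 1) = (a, b)" by fastforce
    have w: "walk col xmin ymax i = (a, Suc b)"
      by (simp only: walk.simps[of col xmin ymax i] if_P[OF True] ab Let_def prod.case)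
    show ?thesis using "1.IH"[OF True] True ab w by auto
  next
    case False
    have w: "walk col xmin ymax i = (i, 1)"
      by (simp only: walk.simps[of col xmin ymax i] if_not_P[OF False])
    show ?thesis using False w by auto
  qed
qed

lemma sp_strict:
  assumes "sorted_pareto n A" "i < i'" "i' < n"
  shows "fst (A!i) < fst (A!i') \<and> snd (A!i') < snd (A!i)"
proof -
  have len: "length A = n" and s: "sorted_wrt (<) A" and p: "pareto (set A)"
    using assms(1) unfolding sorted_pareto_def by auto
  have lt: "A!i < A!i'" using s assms(2,3) len by (simp add: sorted_wrt_iff_nth_less)
  have mem: "A!i \<in> set A" "A!i' \<in> set A" using assms(2,3) len by auto
  have nd: "\<not> dominates (A!i) (A!i')" using p mem unfolding pareto_def by blast
  have ne: "A!i \<noteq> A!i'" using lt by auto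
  have l2: "fst (A!i) < fst (A!i') \<or> (fst (A!i) = fst (A!i') \<and> snd (A!i) < snd (A!i'))"
    using lt unfolding less_prod_def by auto
  have nd2: "\<not> (fst (A!i) \<le> fst (A!i') \<and> snd (A!i) \<le> snd (A!i'))"
    using nd ne unfolding dominates_def by auto
  show ?thesis using l2 nd2 by linarith
qed

lemma sp_weak:
  assumes "sorted_pareto n A" "i \<le> i'" "i' < n"
  shows "fst (A!i) \<le> fst (A!i') \<and> snd (A!i') \<le> snd (A!i)"
proof (cases "i = i'")
  case False
  then have "i < i'" using assms(2) by simp
  then show ?thesis using sp_strict[OF assms(1) _ assms(3), of i] by simp
qed simp

context
  fixes n :: nat and A B :: "point list" and xmin xmax ymin ymax :: real
  assumes n1: "1 \<le> n" and sA: "sorted_pareto n A" and sB: "sorted_pareto n B"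
begin

abbreviation "M \<equiv> mink A B"
abbreviation "ok j i \<equiv> walk_ok xmin ymax (mink A B i j)"

lemma M_weak: "i \<le> i' \<Longrightarrow> i' < n \<Longrightarrow> j \<le> j' \<Longrightarrow> j' < n \<Longrightarrow>
   fst (M i j) \<le> fst (M i' j') \<and> snd (M i' j') \<le> snd (M i j)"
  using sp_weak[OF sA, of i i'] sp_weak[OF sB, of j j'] unfolding mink_def by auto

lemma M_strict: "i < i' \<Longrightarrow> i' < n \<Longrightarrow> j < n \<Longrightarrow>
   fst (M i j) < fst (M i' j)"
  using sp_strict[OF sA, of i i'] unfolding mink_def by auto

lemma ok_mono: "ok j i \<Longrightarrow> i \<le> i' \<Longrightarrow> i' < n \<Longrightarrow> j \<le> j' \<Longrightarrow> j' < n \<Longrightarrow> ok j' i'"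
  using M_weak[of i i' j j'] unfolding walk_ok_def by auto

definition S :: "nat \<Rightarrow> point set" where
  "S j = {p. \<exists>i<n. \<exists>j'<j. p = M i j' \<and> in_range xmin xmax ymin ymax p}"

definition C :: "nat \<Rightarrow> point set" where
  "C j = {p. \<exists>i<n. p = M i j \<and> in_range xmin xmax ymin ymax p}"

lemma S_Suc: "S (Suc j) = S j \<union> C j"
  unfolding S_def C_def using less_Suc_eq by auto

lemma S_fin: "finite (S j)"
proof -
  have "S j \<subseteq> (\<lambda>(i, j'). M i j') ` ({..<n} \<times> {..<j})"
    unfolding S_def by auto
  then show ?thesis by (rule finite_subset) auto
qed

lemma C_fin: "finite (C j)"
proof -
  have "C j \<subseteq> (\<lambda>i. M i j) ` {..<n}"
    unfolding C_def by auto
  then show ?thesis by (rule finite_subset) auto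
qed

definition res :: "point set \<Rightarrow> point option" where
  "res X = (if X = {} then None else Some (Min X))"

definition inv :: "nat \<Rightarrow> point option \<times> nat \<times> nat \<Rightarrow> bool" where
  "inv j st = (case st of (cand, i, t) \<Rightarrow>
      i < n \<and> t + i = n - 1 + 2 * j \<and> (i = n - 1 \<or> (\<exists>j'<j. ok j' i)) \<and> cand = res (S j))"

lemma inv_step:
  assumes "inv j st" "j < n"
  shows "inv (Suc j) (sweep_col A B xmin xmax ymin ymax j st)"
proof -
  obtain cand i t where st: "st = (cand, i, t)" by (cases st) auto
  have i: "i < n" and t: "t + i = n - 1 + 2 * j" and io: "i = n - 1 \<or> (\<exists>j'<j. ok j' i)"
    and c: "cand = res (S j)"
    using assms(1) st unfolding inv_def by auto
  define w where "w = walk (\<lambda>r. M r j) xmin ymax i"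
  obtain i' k where w': "w = (i', k)" by fastforce
  have W: "i' \<le> i" "k = i - i' + 1"
    "ok j i \<Longrightarrow> ok j i' \<and> (i' = 0 \<or> \<not> ok j (i' - 1))"
    "\<not> ok j i \<Longrightarrow> i' = i"
    using walk_props[of "\<lambda>r. M r j" xmin ymax i] w' unfolding w_def by auto
  define p where "p = M i' j"
  have i'n: "i' < n" using W i by auto
  have colmin: "C j \<noteq> {} \<Longrightarrow> in_range xmin xmax ymin ymax p \<and> p = Min (C j)"
  proof -
    assume ne: "C j \<noteq> {}"
    then obtain r where r: "r < n" "in_range xmin xmax ymin ymax (M r j)"
      unfolding C_def by auto
    have okr: "ok j r" using r(2) unfolding in_range_def walk_ok_def by auto
    have oki: "ok j i"
      using io
    proof
      assume "i = n - 1" then show ?thesis using ok_mono[of r j "n-1" j] r(1) okr assms(2) by auto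
    next
      assume "\<exists>j'<j. ok j' i"
      then obtain j' where "j' < j" "ok j' i" by blast
      then show ?thesis using ok_mono[of i j' i j] i assms(2) by auto
    qed
    have ok': "ok j i'" and top: "i' = 0 \<or> \<not> ok j (i' - 1)" using W(3)[OF oki] by auto
    have below: "\<And>q. q < n \<Longrightarrow> ok j q \<Longrightarrow> i' \<le> q"
    proof (rule ccontr)
      fix q assume q: "q < n" "ok j q" "\<not> i' \<le> q"
      then have "ok j (i' - 1)" using ok_mono[of q j "i'-1" j] i'n assms(2) by auto
      then show False using top q by auto
    qed
    have le: "\<And>y. y \<in> C j \<Longrightarrow> p \<le> y"
    proof -
      fix y assume "y \<in> C j"
      then obtain q where q: "q < n" "y = M q j" "in_range xmin xmax ymin ymax y"
        unfolding C_def by auto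
      have "ok j q" using q unfolding in_range_def walk_ok_def by auto
      then have "i' \<le> q" using below q by auto
      then show "p \<le> y"
      proof (cases "i' = q")
        case False
        then have "fst p < fst y" using M_strict[of i' q j] q `i' \<le> q` assms(2) p_def by auto
        then show ?thesis unfolding less_eq_prod_def by auto
      qed (simp add: p_def q)
    qed
    have inr: "in_range xmin xmax ymin ymax p"
    proof -
      have "i' \<le> r" using below r okr by auto
      then have "fst p \<le> fst (M r j) \<and> snd (M r j) \<le> snd p"
        using M_weak[of i' r j j] r assms(2) p_def by auto
      then show ?thesis using ok' r(2) p_def unfolding in_range_def walk_ok_def by auto
    qed
    have pC: "p \<in> C j" using inr i'n p_def unfolding C_def by auto
    show ?thesis using inr Min_eqI[OF C_fin le pC] by auto
  qed
  have emp: "C j = {} \<Longrightarrow> \<not> in_range xmin xmax ymin ymax p"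
  proof
    assume "C j = {}" "in_range xmin xmax ymin ymax p"
    then have "p \<in> C j" using i'n p_def unfolding C_def by blast
    then show False using \<open>C j = {}\<close> by simp
  qed
  define cand' where "cand' = (if in_range xmin xmax ymin ymax p \<and>
                            (case cand of None \<Rightarrow> True | Some q \<Rightarrow> p < q)
                         then Some p else cand)"
  have step: "sweep_col A B xmin xmax ymin ymax j st = (cand', i', t + k + 1)"
    unfolding sweep_col_def st cand'_def p_def using w' unfolding w_def by (simp add: Let_def)
  have cand_ok: "cand' = res (S (Suc j))"
  proof (cases "C j = {}")
    case True
    have "\<not> in_range xmin xmax ymin ymax p" using emp True by blast
    then have "cand' = cand" unfolding cand'_def by simp
    then show ?thesis using c True unfolding S_Suc by simp
  next
    case CF: False
    note cm = colmin[OF CF]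
    show ?thesis
    proof (cases "S j = {}")
      case True
      then show ?thesis using cm c CF unfolding cand'_def S_Suc res_def by auto
    next
      case SF: False
      have mm: "Min (S j \<union> C j) = min (Min (S j)) (Min (C j))"
        using Min_Un[OF S_fin SF C_fin CF] .
      show ?thesis using cm c SF CF unfolding cand'_def S_Suc res_def mm
        by (auto simp: min_def)
    qed
  qed
  have io': "i' = n - 1 \<or> (\<exists>j'<Suc j. ok j' i')"
  proof (cases "ok j i")
    case True then show ?thesis using W(3) by auto
  next
    case False then have "i' = i" using W(4) by auto
    then show ?thesis using io less_Suc_eq by auto
  qed
  show ?thesis unfolding step inv_def using i'n io' cand_ok W(1,2) t by auto
qed

lemma inv_all: "j \<le> n \<Longrightarrow> inv j (fold (sweep_col A B xmin xmax ymin ymax) [0..<j] (None, n - 1, 0))"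
proof (induction j)
  case 0
  then show ?case using n1 unfolding inv_def S_def res_def by auto
next
  case (Suc j)
  then show ?case using inv_step[of j] by simp
qed

lemma main_res: "sweep n A B xmin xmax ymin ymax =
   (let S = entries_in_range n A B xmin xmax ymin ymax in if S = {} then None else Some (Min S))"
proof -
  have "inv n (sweep_state n A B xmin xmax ymin ymax)"
    using inv_all[of n] unfolding sweep_state_def by simp
  moreover have "S n = entries_in_range n A B xmin xmax ymin ymax"
    unfolding S_def entries_in_range_def by auto
  ultimately show ?thesis unfolding sweep_def inv_def res_def Let_def
    by (auto split: prod.splits)
qed

lemma main_time: "sweep_time n A B xmin xmax ymin ymax \<le> 3 * n"
proof -
  have "inv n (sweep_state n A B xmin xmax ymin ymax)"
    using inv_all[of n] unfolding sweep_state_def by simp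
  then show ?thesis unfolding sweep_time_def inv_def
    by (auto split: prod.splits)
qed

end

theorem lemma2:
  shows "(\<forall>n A B xmin xmax ymin ymax.
            1 \<le> n \<and> sorted_pareto n A \<and> sorted_pareto n B \<longrightarrow>
            sweep n A B xmin xmax ymin ymax =
              (let S = entries_in_range n A B xmin xmax ymin ymax
               in if S = {} then None else Some (Min S)))
       \<and> (\<exists>c::nat. \<forall>n A B xmin xmax ymin ymax.
            1 \<le> n \<and> sorted_pareto n A \<and> sorted_pareto n B \<longrightarrow>
            sweep_time n A B xmin xmax ymin ymax \<le> c * n)"
  using main_res main_time by blast

end
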